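(* In the curved-exam game described in the context, fix a student $i$ and define $$\phi_i(z):=\Big(m+\tfrac{n-1}{n}(1-z)\Big)^{\alpha_i}\Big(1+\tfrac{nm}{n-1}-z\Big)^{1-\alpha_i}-1 .$$ Then $\phi_i$ has a unique zero $J_i$ in the interval $\big[\frac{nm-\alpha_i}{n-1},\ \frac{nm}{n-1}-\frac{\alpha_i}{n-\alpha_i}\big]$, which is contained in $\big[\frac{nm-1}{n-1},\frac{nm}{n-1}\big]$. Put $x_i^{(L)}(x_{-i}):=\alpha_i-(1-\alpha_i)\big(\frac{nm}{n-1}-\bar x_{-i}\big)$. If $\bar x_{-i}=J_i$, then $U_i(x_i^{(L)},x_{-i})=U_i(\alpha_i,x_{-i})$, the effort $x_i^{(L)}$ makes the curve ($\bar x<m$) and $\alpha_i$ breaks it ($\bar x\ge m$). The best response correspondence $BR_i(x_{-i})=\arg\max_{x_i\in[0,1]}U_i(x_i,x_{-i})$ is $$BR_i(x_{-i})=\begin{cases}\{\alpha_i\} & \text{if } J_i<\bar x_{-i}\le1,\\ \{\alpha_i-(1-\alpha_i)(\frac{nm}{n-1}-J_i),\ \alpha_i\} & \text{if } \bar x_{-i}=J_i,\\ \{\alpha_i-(1-\alpha_i)(\frac{nm}{n-1}-\bar x_{-i})\} & \text{if } \frac{nm}{n-1}-\frac{\alpha_i}{1-\alpha_i}\le\bar x_{-i}<J_i,\\ \{0\} & \text{if } 0\le\bar x_{-i}\le\frac{nm}{n-1}-\frac{\alpha_i}{1-\alpha_i}.\end{cases}$$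
   Context: The curved-exam game: fix $n\ge2$, abilities $\alpha_1,\dots,\alpha_n\in(0,1)$, target mean $m\in(0,1)$. Student $i$ chooses $x_i\in[0,1]$; $x_{-i}=(x_j)_{j\ne i}$; $\bar x=\frac1n\sum_j x_j$, $\bar x_{-i}=\frac1{n-1}\sum_{j\ne i}x_j$. Grade $G_i(x)=x_i+\max(m-\bar x,0)=\max\big(m+\frac{n-1}{n}(x_i-\bar x_{-i}),x_i\big)$ (not truncated at 1); payoff $U_i(x)=G_i(x)^{\alpha_i}(1-x_i)^{1-\alpha_i}$. *)

theory Defs
  imports Complex_Main
begin

text \<open>Curved-exam game. Students are indexed by 0,...,n-1; an effort profile is
  a function x :: nat => real, of which only the values x j for j < n matter.\<close>

definition xbar :: "nat \<Rightarrow> (nat \<Rightarrow> real) \<Rightarrow> real" where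
  "xbar n x = (\<Sum>j<n. x j) / real n"

definition xbar_minus :: "nat \<Rightarrow> nat \<Rightarrow> (nat \<Rightarrow> real) \<Rightarrow> real" where
  "xbar_minus n i x = (\<Sum>j\<in>{..<n} - {i}. x j) / (real n - 1)"

definition grade :: "nat \<Rightarrow> real \<Rightarrow> nat \<Rightarrow> (nat \<Rightarrow> real) \<Rightarrow> real" where
  "grade n m i x = x i + max (m - xbar n x) 0"

text \<open>Payoff of student i with ability a (exponents a, 1-a are positive, so powr
  agrees with the usual power, including at base 0).\<close>
definition payoff :: "nat \<Rightarrow> real \<Rightarrow> real \<Rightarrow> nat \<Rightarrow> (nat \<Rightarrow> real) \<Rightarrow> real" where
  "payoff n m a i x = grade n m i x powr a * (1 - x i) powr (1 - a)"

definition best_response :: "nat \<Rightarrow> real \<Rightarrow> real \<Rightarrow> nat \<Rightarrow> (nat \<Rightarrow> real) \<Rightarrow> real set" where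
  "best_response n m a i x =
     {y \<in> {0..1}. \<forall>z\<in>{0..1}. payoff n m a i (x(i := z)) \<le> payoff n m a i (x(i := y))}"

definition phi :: "nat \<Rightarrow> real \<Rightarrow> real \<Rightarrow> real \<Rightarrow> real" where
  "phi n m a z = (m + (real n - 1) / real n * (1 - z)) powr a
                 * (1 + real n * m / (real n - 1) - z) powr (1 - a) - 1"

definition J_lo :: "nat \<Rightarrow> real \<Rightarrow> real \<Rightarrow> real" where
  "J_lo n m a = (real n * m - a) / (real n - 1)"

definition J_hi :: "nat \<Rightarrow> real \<Rightarrow> real \<Rightarrow> real" where
  "J_hi n m a = real n * m / (real n - 1) - a / (real n - a)"

definition J :: "nat \<Rightarrow> real \<Rightarrow> real \<Rightarrow> real" where
  "J n m a = (THE z. z \<in> {J_lo n m a .. J_hi n m a} \<and> phi n m a z = 0)"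

definition xL :: "nat \<Rightarrow> real \<Rightarrow> real \<Rightarrow> real \<Rightarrow> real" where
  "xL n m a s = a - (1 - a) * (real n * m / (real n - 1) - s)"

end

theory Submission
  imports Defs
begin

lemma amgm:
  fixes a p q :: real
  assumes a: "0<a" "a<1" and p: "0 \<le> p" and q: "0 \<le> q"
  shows "p powr a * q powr (1-a) \<le> a*p + (1-a)*q \<and>
         (p \<noteq> q \<longrightarrow> p powr a * q powr (1-a) < a*p + (1-a)*q)"
proof (cases "p = 0 \<or> q = 0")
  case True
  then show ?thesis using a p q
    by (auto simp: add_pos_nonneg mult_pos_pos)
next
  case False
  then have pp: "p > 0" and qp: "q > 0" using p q by auto
  define M where "M = a*p + (1-a)*q"
  have Mp: "M > 0" unfolding M_def using a pp qp by (simp add: add_pos_pos)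
  have h1: "ln (p/M) \<le> p/M - 1" using ln_le_minus_one pp Mp by simp
  have h2: "ln (q/M) \<le> q/M - 1" using ln_le_minus_one qp Mp by simp
  have sum0: "a*(p/M - 1) + (1-a)*(q/M - 1) = 0"
    using Mp unfolding M_def by (simp add: field_simps)
  define E where "E = a * ln (p/M) + (1-a) * ln (q/M)"
  have E0: "E \<le> 0"
  proof -
    have "a * ln (p/M) \<le> a*(p/M - 1)" using h1 a by (simp add: mult_left_mono)
    moreover have "(1-a) * ln (q/M) \<le> (1-a)*(q/M - 1)" using h2 a by (simp add: mult_left_mono)
    ultimately show ?thesis unfolding E_def using sum0 by linarith
  qed
  have eq: "p powr a * q powr (1-a) = M * exp E"
  proof -
    have "p powr a * q powr (1-a) = exp (a * ln p + (1-a) * ln q)"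
      using pp qp by (simp add: powr_def exp_add)
    also have "a * ln p + (1-a) * ln q = E + ln M"
      unfolding E_def using pp qp Mp by (simp add: ln_div algebra_simps)
    also have "exp (E + ln M) = M * exp E" using Mp by (simp add: exp_add)
    finally show ?thesis .
  qed
  have weak: "p powr a * q powr (1-a) \<le> M"
    using eq E0 Mp by simp
  moreover have "p \<noteq> q \<longrightarrow> p powr a * q powr (1-a) < M"
  proof
    assume "p \<noteq> q"
    have "p \<noteq> M"
    proof
      assume "p = M"
      then have "(1-a)*(p-q) = 0" unfolding M_def by (simp add: algebra_simps)
      then show False using a \<open>p \<noteq> q\<close> by simp
    qed
    then have "p/M \<noteq> 1" using Mp by simp
    then have "ln (p/M) \<noteq> p/M - 1" using ln_eq_minus_one[of "p/M"] pp Mp by auto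
    then have h1': "ln (p/M) < p/M - 1" using h1 by simp
    have "a * ln (p/M) < a*(p/M - 1)" using h1' a by simp
    moreover have "(1-a) * ln (q/M) \<le> (1-a)*(q/M - 1)" using h2 a by (simp add: mult_left_mono)
    ultimately have "E < 0" unfolding E_def using sum0 by linarith
    then show "p powr a * q powr (1-a) < M" using eq Mp by simp
  qed
  ultimately show ?thesis unfolding M_def by simp
qed

lemma amgm2:
  fixes a u v :: real
  assumes a: "0<a" "a<1" and u: "0 \<le> u" and v: "0 \<le> v"
  shows "u powr a * v powr (1-a) \<le> a powr a * (1-a) powr (1-a) * (u+v)"
    and "u powr a * v powr (1-a) = a powr a * (1-a) powr (1-a) * (u+v) \<Longrightarrow> u*(1-a) = v*a"
    and "u*(1-a) = v*a \<Longrightarrow> u powr a * v powr (1-a) = a powr a * (1-a) powr (1-a) * (u+v)"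
proof -
  define p where "p = u/a"
  define q where "q = v/(1-a)"
  have up: "u = a*p" and vq: "v = (1-a)*q" using a unfolding p_def q_def by auto
  have p0: "p \<ge> 0" and q0: "q \<ge> 0" using a u v unfolding p_def q_def by auto
  have A0: "a powr a * (1-a) powr (1-a) > 0" using a by simp
  have eq: "u powr a * v powr (1-a) = a powr a * (1-a) powr (1-a) * (p powr a * q powr (1-a))"
    unfolding up vq by (simp add: powr_mult)
  have uv: "u + v = a*p + (1-a)*q" using up vq by simp
  note am = amgm[OF a p0 q0]
  show "u powr a * v powr (1-a) \<le> a powr a * (1-a) powr (1-a) * (u+v)"
    unfolding eq uv using am A0 by (simp add: mult_left_mono)
  show "u powr a * v powr (1-a) = a powr a * (1-a) powr (1-a) * (u+v) \<Longrightarrow> u*(1-a) = v*a"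
  proof (rule ccontr)
    assume e: "u powr a * v powr (1-a) = a powr a * (1-a) powr (1-a) * (u+v)" and ne: "u*(1-a) \<noteq> v*a"
    have "p \<noteq> q" using ne up vq by (auto simp: algebra_simps)
    then have "p powr a * q powr (1-a) < a*p + (1-a)*q" using am by blast
    then have "u powr a * v powr (1-a) < a powr a * (1-a) powr (1-a) * (u+v)"
      unfolding eq uv using A0 by (intro mult_strict_left_mono)
    then show False using e by simp
  qed
  show "u*(1-a) = v*a \<Longrightarrow> u powr a * v powr (1-a) = a powr a * (1-a) powr (1-a) * (u+v)"
  proof -
    assume "u*(1-a) = v*a"
    then have "(a*(1-a))*(p - q) = 0" using up vq by (simp add: algebra_simps)
    then have pq: "p = q" using a by simp
    have "p powr a * p powr (1-a) = p" using p0
      by (cases "p = 0") (simp_all add: powr_add[symmetric])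
    then show ?thesis unfolding eq uv pq by (simp add: algebra_simps)
  qed
qed

lemma ca_gt:
  fixes a cc :: real
  assumes a: "0<a" "a<1" and cc: "1/2 \<le> cc"
  shows "1 - a < cc powr a"
proof -
  have "(2::real) powr a * 1 powr (1-a) \<le> a*2 + (1-a)*1"
    using amgm[of a 2 1] a by simp
  then have t: "(2::real) powr a \<le> 1 + a" by simp
  have "(1-a) * 2 powr a \<le> (1-a)*(1+a)" using t a by (simp add: mult_left_mono)
  also have "\<dots> < 1" using a by (simp add: algebra_simps)
  finally have "(1-a) < 1 / 2 powr a" by (simp add: field_simps)
  also have "1 / 2 powr a = (1/2) powr a" by (simp add: powr_divide)
  also have "\<dots> \<le> cc powr a" using cc a by (intro powr_mono2) auto
  finally show ?thesis .
qed

definition Uf :: "real \<Rightarrow> real \<Rightarrow> real \<Rightarrow> real \<Rightarrow> real" where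
  "Uf a cc w z = max (cc*(w-(1-z))) z powr a * (1-z) powr (1-a)"

definition BRf :: "real \<Rightarrow> real \<Rightarrow> real \<Rightarrow> real set" where
  "BRf a cc w = {y\<in>{0..1}. \<forall>z\<in>{0..1}. Uf a cc w z \<le> Uf a cc w y}"

lemma Uf_curve:
  fixes a cc w z :: real
  assumes a: "0<a" "a<1" and cc: "0 < cc" and z: "0 \<le> z" "z \<le> 1"
    and cv: "cc*(w-(1-z)) > z"
  shows "Uf a cc w z \<le> cc powr a * (a powr a * (1-a) powr (1-a)) * w"
    and "Uf a cc w z = cc powr a * (a powr a * (1-a) powr (1-a)) * w \<Longrightarrow> z = 1 - (1-a)*w"
proof -
  have u0: "w-(1-z) \<ge> 0"
  proof (rule ccontr)
    assume "\<not> ?thesis"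
    then have "cc*(w-(1-z)) < 0" using cc by (simp add: mult_pos_neg)
    then show False using cv z by simp
  qed
  have v0: "1 - z \<ge> 0" using z by simp
  have U: "Uf a cc w z = cc powr a * ((w-(1-z)) powr a * (1-z) powr (1-a))"
    unfolding Uf_def using cv cc u0 by (simp add: powr_mult)
  note B = amgm2[OF a u0 v0]
  have cp: "cc powr a > 0" using cc by simp
  show "Uf a cc w z \<le> cc powr a * (a powr a * (1-a) powr (1-a)) * w"
    unfolding U using B(1) cp by (simp add: mult_left_mono)
  show "Uf a cc w z = cc powr a * (a powr a * (1-a) powr (1-a)) * w \<Longrightarrow> z = 1 - (1-a)*w"
  proof -
    assume "Uf a cc w z = cc powr a * (a powr a * (1-a) powr (1-a)) * w"
    then have "(w-(1-z)) powr a * (1-z) powr (1-a) = a powr a * (1-a) powr (1-a) * (w - (1-z) + (1-z))"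
      unfolding U using cp by simp
    then have "(w-(1-z))*(1-a) = (1-z)*a" using B(2) by blast
    then show "z = 1 - (1-a)*w" by (simp add: algebra_simps)
  qed
qed

lemma Uf_flat:
  fixes a cc w z :: real
  assumes a: "0<a" "a<1" and z: "0 \<le> z" "z \<le> 1"
    and cv: "\<not> cc*(w-(1-z)) > z"
  shows "Uf a cc w z \<le> a powr a * (1-a) powr (1-a)"
    and "Uf a cc w z = a powr a * (1-a) powr (1-a) \<Longrightarrow> z = a"
proof -
  have U: "Uf a cc w z = z powr a * (1-z) powr (1-a)"
    unfolding Uf_def using cv by (simp add: max_def)
  have v0: "1 - z \<ge> 0" using z by simp
  note B = amgm2[OF a z(1) v0]
  show "Uf a cc w z \<le> a powr a * (1-a) powr (1-a)" unfolding U using B(1) by simp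
  show "Uf a cc w z = a powr a * (1-a) powr (1-a) \<Longrightarrow> z = a"
  proof -
    assume "Uf a cc w z = a powr a * (1-a) powr (1-a)"
    then have "z*(1-a) = (1-z)*a" using B(2) unfolding U by simp
    then show "z = a" by (simp add: algebra_simps)
  qed
qed

lemma Uf_lb1:
  fixes a cc w z :: real
  assumes a: "0<a" "a<1" and z: "0 \<le> z" "z \<le> 1"
  shows "z powr a * (1-z) powr (1-a) \<le> Uf a cc w z"
  unfolding Uf_def using a z by (intro mult_right_mono powr_mono2) auto

lemma Uf_lb2:
  fixes a cc w z :: real
  assumes a: "0<a" "a<1" and cc: "0 < cc" and z: "0 \<le> z" "z \<le> 1" and u: "w - (1-z) \<ge> 0"
  shows "cc powr a * ((w-(1-z)) powr a * (1-z) powr (1-a)) \<le> Uf a cc w z"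
proof -
  have "cc powr a * ((w-(1-z)) powr a * (1-z) powr (1-a)) = (cc*(w-(1-z))) powr a * (1-z) powr (1-a)"
    by (simp add: powr_mult)
  also have "\<dots> \<le> Uf a cc w z"
    unfolding Uf_def using a z cc u by (intro mult_right_mono powr_mono2) auto
  finally show ?thesis .
qed

lemma Uf_at_a:
  fixes a cc w :: real
  assumes a: "0<a" "a<1"
  shows "a powr a * (1-a) powr (1-a) \<le> Uf a cc w a"
  using Uf_lb1[OF a, of a cc w] amgm2(3)[OF a, of a "1-a"] a by simp

lemma Uf_at_xo:
  fixes a cc w :: real
  assumes a: "0<a" "a<1" and cc: "0 < cc" and w: "w > 0" and x0: "0 \<le> 1 - (1-a)*w"
  shows "cc powr a * (a powr a * (1-a) powr (1-a)) * w \<le> Uf a cc w (1 - (1-a)*w)"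
proof -
  have x1: "1 - (1-a)*w \<le> 1" using a w by simp
  have e: "w - (1 - (1 - (1-a)*w)) = a*w" by (simp add: algebra_simps)
  have e2: "1 - (1 - (1-a)*w) = (1-a)*w" by simp
  have "(a*w) powr a * ((1-a)*w) powr (1-a) = a powr a * (1-a) powr (1-a) * (a*w + (1-a)*w)"
    using a w by (intro amgm2(3)) auto
  then have "(a*w) powr a * ((1-a)*w) powr (1-a) = a powr a * (1-a) powr (1-a) * w"
    by (simp add: algebra_simps)
  moreover have "cc powr a * ((w-(1-(1 - (1-a)*w))) powr a * (1-(1 - (1-a)*w)) powr (1-a)) \<le> Uf a cc w (1 - (1-a)*w)"
    using a w by (intro Uf_lb2[OF a cc x0 x1]) (simp add: e)
  ultimately show ?thesis unfolding e e2 by (simp add: algebra_simps)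
qed

lemma BR_case1:
  fixes a cc w :: real
  assumes a: "0<a" "a<1" and cc: "0 < cc" and w: "w > 0" and h: "cc powr a * w < 1"
  shows "BRf a cc w = {a}"
proof -
  define A where "A = a powr a * (1-a) powr (1-a)"
  have A0: "A > 0" unfolding A_def using a by simp
  have lt: "cc powr a * A * w < A" using h A0
    by (metis mult.commute mult.left_commute mult_less_cancel_left_pos mult.right_neutral)
  have ub: "Uf a cc w z \<le> A" if "z \<in> {0..1}" for z
  proof (cases "cc*(w-(1-z)) > z")
    case True then show ?thesis using Uf_curve(1)[OF a cc _ _ True] that lt unfolding A_def by force
  next
    case False then show ?thesis using Uf_flat(1)[OF a _ _ False] that unfolding A_def by force
  qed
  have Ua: "A \<le> Uf a cc w a" using Uf_at_a[OF a] unfolding A_def .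
  show ?thesis
  proof (intro set_eqI iffI)
    fix y assume "y \<in> BRf a cc w"
    then have y: "0 \<le> y" "y \<le> 1" and "Uf a cc w a \<le> Uf a cc w y" using a unfolding BRf_def by auto
    then have Uy: "A \<le> Uf a cc w y" using Ua by simp
    show "y \<in> {a}"
    proof (cases "cc*(w-(1-y)) > y")
      case True then show ?thesis using Uf_curve(1)[OF a cc y True] Uy lt unfolding A_def by simp
    next
      case False then show ?thesis using Uf_flat[OF a y False] Uy ub y unfolding A_def by force
    qed
  next
    fix y assume "y \<in> {a}"
    then show "y \<in> BRf a cc w" unfolding BRf_def using ub Ua a by force
  qed
qed

lemma BR_case2:
  fixes a cc w :: real
  assumes a: "0<a" "a<1" and cc: "0 < cc" and w: "w > 0" and h: "cc powr a * w = 1"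
    and x0: "0 \<le> 1 - (1-a)*w"
  shows "BRf a cc w = {1 - (1-a)*w, a}"
proof -
  define A where "A = a powr a * (1-a) powr (1-a)"
  have A0: "A > 0" unfolding A_def using a by simp
  have eqA: "cc powr a * A * w = A" using h by (simp add: algebra_simps)
  have x1: "1 - (1-a)*w \<le> 1" using a w by simp
  have ub: "Uf a cc w z \<le> A" if "z \<in> {0..1}" for z
  proof (cases "cc*(w-(1-z)) > z")
    case True then show ?thesis using Uf_curve(1)[OF a cc _ _ True] that eqA unfolding A_def by force
  next
    case False then show ?thesis using Uf_flat(1)[OF a _ _ False] that unfolding A_def by force
  qed
  have Ua: "A \<le> Uf a cc w a" using Uf_at_a[OF a] unfolding A_def .
  have Ux: "A \<le> Uf a cc w (1 - (1-a)*w)" using Uf_at_xo[OF a cc w x0] eqA unfolding A_def by simp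
  show ?thesis
  proof (intro set_eqI iffI)
    fix y assume "y \<in> BRf a cc w"
    then have y: "0 \<le> y" "y \<le> 1" and "Uf a cc w a \<le> Uf a cc w y" using a unfolding BRf_def by auto
    then have Uy: "A \<le> Uf a cc w y" using Ua by simp
    show "y \<in> {1 - (1-a)*w, a}"
    proof (cases "cc*(w-(1-y)) > y")
      case True then show ?thesis using Uf_curve[OF a cc y True] Uy ub y eqA unfolding A_def by force
    next
      case False then show ?thesis using Uf_flat[OF a y False] Uy ub y unfolding A_def by force
    qed
  next
    fix y assume "y \<in> {1 - (1-a)*w, a}"
    then show "y \<in> BRf a cc w" unfolding BRf_def using ub Ua Ux a x0 x1 by force
  qed
qed

lemma BR_case3:
  fixes a cc w :: real
  assumes a: "0<a" "a<1" and cc: "0 < cc" and w: "w > 0" and h: "cc powr a * w > 1"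
    and x0: "0 \<le> 1 - (1-a)*w"
  shows "BRf a cc w = {1 - (1-a)*w}"
proof -
  define A where "A = a powr a * (1-a) powr (1-a)"
  define B where "B = cc powr a * A * w"
  have A0: "A > 0" unfolding A_def using a by simp
  have lt: "A < B" unfolding B_def using h A0
    by (metis mult.commute mult.left_commute mult_less_cancel_left_pos mult.right_neutral)
  have x1: "1 - (1-a)*w \<le> 1" using a w by simp
  have ub: "Uf a cc w z \<le> B" if "z \<in> {0..1}" for z
  proof (cases "cc*(w-(1-z)) > z")
    case True then show ?thesis using Uf_curve(1)[OF a cc _ _ True] that unfolding A_def B_def by force
  next
    case False then show ?thesis using Uf_flat(1)[OF a _ _ False] that lt unfolding A_def by force
  qed
  have Ux: "B \<le> Uf a cc w (1 - (1-a)*w)" using Uf_at_xo[OF a cc w x0] unfolding A_def B_def by simp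
  show ?thesis
  proof (intro set_eqI iffI)
    fix y assume "y \<in> BRf a cc w"
    then have y: "0 \<le> y" "y \<le> 1" and "Uf a cc w (1 - (1-a)*w) \<le> Uf a cc w y"
      using x0 x1 unfolding BRf_def by auto
    then have Uy: "B \<le> Uf a cc w y" using Ux by simp
    show "y \<in> {1 - (1-a)*w}"
    proof (cases "cc*(w-(1-y)) > y")
      case True then show ?thesis using Uf_curve[OF a cc y True] Uy ub y unfolding A_def B_def by force
    next
      case False then show ?thesis using Uf_flat[OF a y False] Uy lt unfolding A_def by force
    qed
  next
    fix y assume "y \<in> {1 - (1-a)*w}"
    then show "y \<in> BRf a cc w" unfolding BRf_def using ub Ux x0 x1 by force
  qed
qed

lemma Uf_curve0:
  fixes a cc w z :: real
  assumes a: "0<a" "a<1" and cc: "0 < cc" and z: "0 < z" "z \<le> 1"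
    and cv: "cc*(w-(1-z)) > z" and h: "(1-a)*w \<ge> 1"
  shows "Uf a cc w z < cc powr a * (w-1) powr a"
proof -
  define Y where "Y = 1 - z"
  have Y: "0 \<le> Y" "Y < 1" using z unfolding Y_def by auto
  have w1: "w - 1 > 0"
  proof -
    show ?thesis
    proof (rule ccontr)
      assume "\<not> w - 1 > 0"
      then have "(1-a)*w \<le> (1-a)*1" using a by (intro mult_left_mono) auto
      then have "(1-a)*w \<le> 1 - a" by simp
      then show False using h a by linarith
    qed
  qed
  have u0: "w - Y \<ge> 0" using w1 Y by simp
  define p where "p = (w-Y)/(w-1)"
  have p0: "p \<ge> 0" unfolding p_def using u0 w1 by simp
  have wp: "w - Y = (w-1)*p" unfolding p_def using w1 by simp
  have U: "Uf a cc w z = cc powr a * ((w-1) powr a * (p powr a * Y powr (1-a)))"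
    unfolding Uf_def Y_def[symmetric] using cv cc u0 unfolding Y_def[symmetric]
    by (simp add: powr_mult wp)
  have lin: "a*p + (1-a)*Y \<le> 1"
  proof -
    have "(w-1) - a*(w-Y) - (1-a)*Y*(w-1) = (1-Y)*((1-a)*w - 1)" by (simp add: algebra_simps)
    also have "\<dots> \<ge> 0" using Y h by simp
    finally have "a*(w-Y) + (1-a)*Y*(w-1) \<le> (w-1)" by simp
    then have "(a*p + (1-a)*Y)*(w-1) \<le> 1*(w-1)" unfolding wp by (simp add: algebra_simps)
    then show ?thesis using w1 by (simp only: mult_le_cancel_right_pos)
  qed
  have pY: "p \<noteq> Y"
  proof
    assume "p = Y"
    then have "w - Y = (w-1)*Y" using wp by simp
    then have "w*(1-Y) = 0" by (simp add: algebra_simps)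
    then show False using w1 Y by simp
  qed
  have "p powr a * Y powr (1-a) < 1" using amgm[OF a p0 Y(1)] pY lin by linarith
  then have "(w-1) powr a * (p powr a * Y powr (1-a)) < (w-1) powr a" using w1 by simp
  then show ?thesis unfolding U using cc by simp
qed

lemma BR_case4:
  fixes a cc w :: real
  assumes a: "0<a" "a<1" and cc: "1/2 \<le> cc" and h: "(1-a)*w \<ge> 1"
  shows "BRf a cc w = {0}"
proof -
  have cc0: "0 < cc" using cc by simp
  define A where "A = a powr a * (1-a) powr (1-a)"
  define B where "B = cc powr a * (w-1) powr a"
  have w1: "(1-a)*(w - 1) \<ge> a" using h by (simp add: algebra_simps)
  have wa: "w - 1 \<ge> a/(1-a)" using w1 a by (simp add: field_simps)
  have "A < B"
  proof -
    have "A = (1-a) * (a powr a / (1-a) powr a)"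
    proof -
      have "(1-a) powr (1-a) * (1-a) powr a = (1-a)" using a by (simp add: powr_add[symmetric])
      then have e: "(1-a) powr (1-a) = (1-a) / (1-a) powr a" using a by (simp add: field_simps)
      show ?thesis unfolding A_def e by simp
    qed
    also have "\<dots> < cc powr a * (a powr a / (1-a) powr a)"
      using ca_gt[OF a cc] a by (intro mult_strict_right_mono) auto
    also have "a powr a / (1-a) powr a = (a/(1-a)) powr a" by (simp add: powr_divide)
    also have "cc powr a * \<dots> \<le> B" unfolding B_def using wa a
      by (intro mult_left_mono powr_mono2) auto
    finally show ?thesis .
  qed
  have "a/(1-a) \<ge> 0" using a by simp
  then have wg: "w - 1 \<ge> 0" using wa by linarith
  have "cc * (w-1) \<ge> 0" using wg cc0 by simp
  then have U0e: "Uf a cc w 0 = B" unfolding Uf_def B_def using wg cc0 by (simp add: powr_mult)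
  then have U0: "B \<le> Uf a cc w 0" by simp
  have ub: "Uf a cc w z \<le> B" if "z \<in> {0..1}" for z
  proof (cases "cc*(w-(1-z)) > z")
    case True
    show ?thesis
    proof (cases "z = 0")
      case True then show ?thesis using U0e by simp
    next
      case False
      then show ?thesis using Uf_curve0[OF a cc0 _ _ \<open>cc*(w-(1-z)) > z\<close> h] that unfolding B_def by force
    qed
  next
    case False then show ?thesis using Uf_flat(1)[OF a _ _ False] that \<open>A < B\<close> unfolding A_def by force
  qed
  show ?thesis
  proof (intro set_eqI iffI)
    fix y assume "y \<in> BRf a cc w"
    then have y: "0 \<le> y" "y \<le> 1" and "Uf a cc w 0 \<le> Uf a cc w y"
      unfolding BRf_def by auto
    then have Uy: "B \<le> Uf a cc w y" using U0 by simp
    show "y \<in> {0}"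
    proof (cases "cc*(w-(1-y)) > y")
      case True
      show ?thesis
      proof (rule ccontr)
        assume "y \<notin> {0}"
        then have "0 < y" using y by simp
        then show False using Uf_curve0[OF a cc0 _ y(2) True h] Uy unfolding B_def by simp
      qed
    next
      case False then show ?thesis using Uf_flat[OF a y False] Uy \<open>A < B\<close> unfolding A_def by force
    qed
  next
    fix y :: real assume "y \<in> {0}"
    then show "y \<in> BRf a cc w" unfolding BRf_def using ub U0 by force
  qed
qed

lemma phi_lin:
  fixes n :: nat and m a z :: real
  assumes n: "n \<ge> 2" and z: "z < 1 + real n * m / (real n - 1)"
  shows "phi n m a z = ((real n - 1)/real n) powr a * (1 + real n * m / (real n - 1) - z) - 1"
proof -
  define N where "N = real n"
  have N: "N \<ge> 2" using n unfolding N_def by simp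
  define K where "K = N*m/(N-1)"
  define cc where "cc = (N-1)/N"
  have cc0: "cc > 0" unfolding cc_def using N by simp
  have w0: "1 + K - z > 0" using z unfolding K_def N_def by simp
  have e: "m + (N-1)/N*(1-z) = cc * (1 + K - z)"
    unfolding cc_def K_def using N by (simp add: field_simps)
  have "phi n m a z = (cc * (1 + K - z)) powr a * (1 + K - z) powr (1-a) - 1"
    unfolding phi_def N_def[symmetric] e K_def ..
  also have "\<dots> = cc powr a * ((1 + K - z) powr a * (1 + K - z) powr (1-a)) - 1"
    by (simp add: powr_mult)
  also have "(1 + K - z) powr a * (1 + K - z) powr (1-a) = 1 + K - z"
    using w0 by (simp add: powr_add[symmetric])
  finally show ?thesis unfolding cc_def K_def N_def .
qed

lemma ca_bounds:
  fixes n :: nat and a :: real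
  assumes n: "n \<ge> 2" and a: "0<a" "a<1"
  shows "((real n - 1)/real n) powr a < 1 - a/real n"
    and "((real n - 1)/real n) powr a * (1 + a/(real n - 1)) > 1"
proof -
  define N where "N = real n"
  have N: "N \<ge> 2" using n unfolding N_def by simp
  define cc where "cc = (N-1)/N"
  have cc0: "0 \<le> cc" "cc \<noteq> 1" unfolding cc_def using N by auto
  have "cc powr a * 1 powr (1-a) < a*cc + (1-a)*1"
    using amgm[OF a cc0(1), of 1] cc0 by simp
  also have "a*cc + (1-a)*1 = 1 - a/N" unfolding cc_def using N by (simp add: field_simps)
  finally show "((real n - 1)/real n) powr a < 1 - a/real n" unfolding cc_def N_def by simp
  define r where "r = N/(N-1)"
  have r0: "0 \<le> r" "r \<noteq> 1" "r > 0" unfolding r_def using N by auto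
  have "r powr a * 1 powr (1-a) < a*r + (1-a)*1"
    using amgm[OF a r0(1), of 1] r0 by simp
  also have "a*r + (1-a)*1 = 1 + a/(N-1)" unfolding r_def using N by (simp add: field_simps)
  finally have rl: "r powr a < 1 + a/(N-1)" by simp
  have ccr: "cc = 1/r" unfolding cc_def r_def by simp
  have rp: "r powr a > 0" using r0 by simp
  have "cc powr a = 1 / r powr a" unfolding ccr by (simp add: powr_divide)
  then have "cc powr a * (1 + a/(N-1)) > cc powr a * r powr a" using rl rp by simp
  also have "cc powr a * r powr a = 1" using \<open>cc powr a = 1 / r powr a\<close> rp by simp
  finally show "((real n - 1)/real n) powr a * (1 + a/(real n - 1)) > 1" unfolding cc_def N_def .
qed

lemma J_props:
  fixes n :: nat and m a :: real
  assumes n: "n \<ge> 2" and m: "0 < m" "m < 1" and a: "0<a" "a<1"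
  shows "\<exists>!z. z \<in> {J_lo n m a .. J_hi n m a} \<and> phi n m a z = 0"
    and "J n m a = 1 + real n * m / (real n - 1) - 1 / ((real n - 1)/real n) powr a"
    and "J_lo n m a < J n m a" and "J n m a < J_hi n m a"
    and "{J_lo n m a .. J_hi n m a} \<subseteq> {(real n * m - 1) / (real n - 1) .. real n * m / (real n - 1)}"
proof -
  define N where "N = real n"
  have N: "N \<ge> 2" using n unfolding N_def by simp
  define K where "K = N*m/(N-1)"
  define ca where "ca = ((N-1)/N) powr a"
  have ca0: "ca > 0" unfolding ca_def using N by simp
  define Jv where "Jv = 1 + K - 1/ca"
  have cb1: "ca < 1 - a/N" using ca_bounds(1)[OF n a] unfolding ca_def N_def .
  have cb2: "ca * (1 + a/(N-1)) > 1" using ca_bounds(2)[OF n a] unfolding ca_def N_def .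
  have lo: "J_lo n m a = K - a/(N-1)" unfolding J_lo_def K_def N_def[symmetric]
    by (simp add: diff_divide_distrib)
  have hi: "J_hi n m a = K - a/(N-a)" unfolding J_hi_def K_def N_def[symmetric] ..
  have Jlo: "J_lo n m a < Jv"
  proof -
    have "1/ca < 1 + a/(N-1)" using cb2 ca0 by (simp add: field_simps)
    then show ?thesis unfolding lo Jv_def by simp
  qed
  have Jhi: "Jv < J_hi n m a"
  proof -
    have "ca * N < N - a" using cb1 N by (simp add: field_simps)
    then have "N/(N-a) < 1/ca" using ca0 N a by (simp add: field_simps)
    moreover have "N/(N-a) = 1 + a/(N-a)" using N a by (simp add: field_simps)
    ultimately show ?thesis unfolding hi Jv_def by simp
  qed
  have Khi: "J_hi n m a \<le> K" unfolding hi using N a by simp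
  have phi_eq: "phi n m a z = ca * (1 + K - z) - 1" if "z \<le> K" for z
    using phi_lin[OF n, of z m a] that unfolding ca_def K_def N_def by simp
  have zero_iff: "phi n m a z = 0 \<longleftrightarrow> z = Jv" if "z \<le> K" for z
    using phi_eq[OF that] ca0 unfolding Jv_def by (auto simp: field_simps)
  have ex: "\<exists>!z. z \<in> {J_lo n m a .. J_hi n m a} \<and> phi n m a z = 0"
  proof (rule ex1I[of _ Jv])
    show "Jv \<in> {J_lo n m a .. J_hi n m a} \<and> phi n m a Jv = 0"
      using Jlo Jhi Khi zero_iff[of Jv] by simp
  next
    fix z assume "z \<in> {J_lo n m a .. J_hi n m a} \<and> phi n m a z = 0"
    then show "z = Jv" using Khi zero_iff[of z] by auto
  qed
  show "\<exists>!z. z \<in> {J_lo n m a .. J_hi n m a} \<and> phi n m a z = 0" by (rule ex)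
  have JJ: "J n m a = Jv" unfolding J_def
    using Jlo Jhi Khi zero_iff[of Jv] by (intro the1_equality[OF ex]) simp
  show "J n m a = 1 + real n * m / (real n - 1) - 1 / ((real n - 1)/real n) powr a"
    unfolding JJ Jv_def K_def ca_def N_def ..
  show "J_lo n m a < J n m a" "J n m a < J_hi n m a" using JJ Jlo Jhi by auto
  have "(N*m - 1)/(N-1) \<le> J_lo n m a" unfolding J_lo_def N_def[symmetric] using N a
    by (simp add: divide_right_mono)
  then show "{J_lo n m a .. J_hi n m a} \<subseteq> {(real n * m - 1) / (real n - 1) .. real n * m / (real n - 1)}"
    using Khi unfolding K_def N_def by auto
qed

lemma sum_upd:
  fixes x :: "nat \<Rightarrow> real"
  assumes i: "i < n"
  shows "(\<Sum>j<n. (x(i := z)) j) = z + (\<Sum>j\<in>{..<n} - {i}. x j)"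
proof -
  have "(\<Sum>j<n. (x(i := z)) j) = (x(i := z)) i + (\<Sum>j\<in>{..<n} - {i}. (x(i := z)) j)"
    using i by (intro sum.remove) auto
  also have "(\<Sum>j\<in>{..<n} - {i}. (x(i := z)) j) = (\<Sum>j\<in>{..<n} - {i}. x j)"
    by (intro sum.cong) auto
  finally show ?thesis by simp
qed

lemma profile:
  fixes n i :: nat and x :: "nat \<Rightarrow> real" and m a z :: real
  assumes n: "n \<ge> 2" and i: "i < n"
  shows "xbar n (x(i:=z)) = (z + (real n - 1) * xbar_minus n i x) / real n"
    and "payoff n m a i (x(i:=z)) = Uf a ((real n - 1)/real n) (1 + real n * m / (real n - 1) - xbar_minus n i x) z"
    and "best_response n m a i x = BRf a ((real n - 1)/real n) (1 + real n * m / (real n - 1) - xbar_minus n i x)"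
proof -
  define N where "N = real n"
  have N: "N \<ge> 2" using n unfolding N_def by simp
  define s where "s = xbar_minus n i x"
  have S: "(\<Sum>j\<in>{..<n} - {i}. x j) = (N - 1) * s"
    unfolding s_def xbar_minus_def N_def[symmetric] using N by simp
  show xb: "xbar n (x(i:=z)) = (z + (real n - 1) * xbar_minus n i x) / real n" for z
    unfolding xbar_def sum_upd[OF i] S[unfolded s_def N_def] ..
  have gr: "grade n m i (x(i:=z)) = max (((real n - 1)/real n) * ((1 + real n * m / (real n - 1) - xbar_minus n i x) - (1-z))) z" for z
  proof -
    have e: "z + (m - (z + (N-1)*s)/N) = ((N - 1)/N) * ((1 + N * m / (N - 1) - s) - (1-z))"
      using N by (simp add: field_simps)
    show ?thesis unfolding grade_def xb N_def[symmetric] s_def[symmetric]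
      using e by (simp add: max_def)
  qed
  show pay: "payoff n m a i (x(i:=z)) = Uf a ((real n - 1)/real n) (1 + real n * m / (real n - 1) - xbar_minus n i x) z" for z
    unfolding payoff_def gr Uf_def by simp
  show "best_response n m a i x = BRf a ((real n - 1)/real n) (1 + real n * m / (real n - 1) - xbar_minus n i x)"
    unfolding best_response_def BRf_def pay ..
qed

lemma s_bounds:
  fixes n i :: nat and x :: "nat \<Rightarrow> real"
  assumes n: "n \<ge> 2" and i: "i < n" and x: "\<forall>j\<in>{..<n} - {i}. 0 \<le> x j \<and> x j \<le> 1"
  shows "0 \<le> xbar_minus n i x" "xbar_minus n i x \<le> 1"
proof -
  have c: "card ({..<n} - {i}) = n - 1" using i by simp
  have N: "real n - 1 > 0" using n by simp
  have "(\<Sum>j\<in>{..<n} - {i}. x j) \<ge> 0" using x by (intro sum_nonneg) auto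
  then show "0 \<le> xbar_minus n i x" unfolding xbar_minus_def using N by simp
  have "(\<Sum>j\<in>{..<n} - {i}. x j) \<le> (\<Sum>j\<in>{..<n} - {i}. 1)" using x by (intro sum_mono) auto
  also have "\<dots> = real n - 1" using c n by (simp add: of_nat_diff)
  finally show "xbar_minus n i x \<le> 1" unfolding xbar_minus_def using N by simp
qed

theorem mainTheorem10:
  fixes n :: nat and \<alpha> :: "nat \<Rightarrow> real" and m :: real and i :: nat
  assumes hn: "n \<ge> 2"
    and h\<alpha>: "\<forall>j<n. 0 < \<alpha> j \<and> \<alpha> j < 1"
    and hm: "0 < m" "m < 1"
    and hi: "i < n"
  shows
    "(\<exists>!z. z \<in> {J_lo n m (\<alpha> i) .. J_hi n m (\<alpha> i)} \<and> phi n m (\<alpha> i) z = 0)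
     \<and> {J_lo n m (\<alpha> i) .. J_hi n m (\<alpha> i)}
         \<subseteq> {(real n * m - 1) / (real n - 1) .. real n * m / (real n - 1)}
     \<and> (\<forall>x. (\<forall>j\<in>{..<n} - {i}. 0 \<le> x j \<and> x j \<le> 1) \<longrightarrow>
          (let s = xbar_minus n i x; Ji = J n m (\<alpha> i); a = \<alpha> i;
               t = real n * m / (real n - 1) - a / (1 - a) in
            (s = Ji \<longrightarrow>
               payoff n m a i (x(i := xL n m a s)) = payoff n m a i (x(i := a))
               \<and> xbar n (x(i := xL n m a s)) < m
               \<and> xbar n (x(i := a)) \<ge> m)
          \<and> (Ji < s \<and> s \<le> 1 \<longrightarrow> best_response n m a i x = {a})
          \<and> (s = Ji \<longrightarrow> best_response n m a i x = {xL n m a Ji, a})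
          \<and> (t \<le> s \<and> s < Ji \<longrightarrow> best_response n m a i x = {xL n m a s})
          \<and> (0 \<le> s \<and> s \<le> t \<longrightarrow> best_response n m a i x = {0})))"
proof -
  define a where "a = \<alpha> i"
  have a: "0 < a" "a < 1" using h\<alpha> hi unfolding a_def by auto
  define N where "N = real n"
  have N: "N \<ge> 2" using hn unfolding N_def by simp
  define K where "K = N * m / (N - 1)"
  have K0: "K > 0" unfolding K_def using N hm by simp
  define cc where "cc = (N - 1) / N"
  have cc: "1/2 \<le> cc" "0 < cc" unfolding cc_def using N by (auto simp: field_simps)
  define ca where "ca = cc powr a"
  have ca0: "ca > 0" unfolding ca_def using cc by simp
  have cagt: "1 - a < ca" unfolding ca_def using ca_gt[OF a cc(1)] .
  note JP = J_props[OF hn hm a]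
  have Jv: "J n m a = 1 + K - 1/ca" using JP(2) unfolding K_def ca_def cc_def N_def .
  have cb1: "ca < 1 - a/N" using ca_bounds(1)[OF hn a] unfolding ca_def cc_def N_def .
  have cb2: "ca * (1 + a/(N-1)) > 1" using ca_bounds(2)[OF hn a] unfolding ca_def cc_def N_def .
  have main: "(let s = xbar_minus n i x; Ji = J n m a; a = a;
               t = real n * m / (real n - 1) - a / (1 - a) in
            (s = Ji \<longrightarrow>
               payoff n m a i (x(i := xL n m a s)) = payoff n m a i (x(i := a))
               \<and> xbar n (x(i := xL n m a s)) < m
               \<and> xbar n (x(i := a)) \<ge> m)
          \<and> (Ji < s \<and> s \<le> 1 \<longrightarrow> best_response n m a i x = {a})
          \<and> (s = Ji \<longrightarrow> best_response n m a i x = {xL n m a Ji, a})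
          \<and> (t \<le> s \<and> s < Ji \<longrightarrow> best_response n m a i x = {xL n m a s})
          \<and> (0 \<le> s \<and> s \<le> t \<longrightarrow> best_response n m a i x = {0}))"
    if xb: "\<forall>j\<in>{..<n} - {i}. 0 \<le> x j \<and> x j \<le> 1" for x
  proof -
    define s where "s = xbar_minus n i x"
    have s: "0 \<le> s" "s \<le> 1" using s_bounds[OF hn hi xb] unfolding s_def by auto
    define w where "w = 1 + K - s"
    have w0: "w > 0" unfolding w_def using s K0 by simp
    have BR: "best_response n m a i x = BRf a cc w"
      using profile(3)[OF hn hi, of m a x] unfolding w_def K_def cc_def N_def s_def .
    have PAY: "payoff n m a i (x(i:=z)) = Uf a cc w z" for z
      using profile(2)[OF hn hi, of m a x z] unfolding w_def K_def cc_def N_def s_def .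
    have XB: "xbar n (x(i:=z)) = (z + (N - 1) * s) / N" for z
      using profile(1)[OF hn hi, of x z] unfolding N_def s_def .
    have xLe: "xL n m a s = 1 - (1-a)*w" unfolding xL_def w_def K_def N_def by (simp add: algebra_simps)
    have t_iff: "(K - a/(1-a) \<le> s) = ((1-a)*w \<le> 1)"
    proof -
      have "(K - a/(1-a) \<le> s) = (K - s \<le> a/(1-a))" by linarith
      also have "\<dots> = ((1-a)*(K-s) \<le> a)" using a by (simp add: field_simps)
      also have "\<dots> = ((1-a)*w \<le> 1)" unfolding w_def by (simp add: algebra_simps)
      finally show ?thesis .
    qed
    have t_iff2: "(s \<le> K - a/(1-a)) = ((1-a)*w \<ge> 1)"
    proof -
      have "(s \<le> K - a/(1-a)) = (a/(1-a) \<le> K - s)" by linarith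
      also have "\<dots> = (a \<le> (1-a)*(K-s))" using a by (simp add: field_simps)
      also have "\<dots> = ((1-a)*w \<ge> 1)" unfolding w_def by (simp add: algebra_simps)
      finally show ?thesis .
    qed
    have cw_lt: "ca * w < 1" if "J n m a < s"
    proof -
      have "w < 1/ca" using that unfolding Jv w_def by simp
      then show ?thesis using ca0 by (simp add: field_simps)
    qed
    have cw_gt: "ca * w > 1" if "s < J n m a"
    proof -
      have "w > 1/ca" using that unfolding Jv w_def by simp
      then show ?thesis using ca0 by (simp add: field_simps)
    qed
    have cw_eq: "ca * w = 1" if "s = J n m a"
    proof -
      have "w = 1/ca" using that unfolding Jv w_def by simp
      then show ?thesis using ca0 by (simp add: field_simps)
    qed
    have xo0: "0 \<le> 1 - (1-a)*w" if "s = J n m a"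
    proof -
      have "(1-a)*w = (1-a)/ca" using cw_eq[OF that] ca0 by (simp add: field_simps)
      also have "\<dots> < 1" using cagt ca0 by (simp add: field_simps)
      finally show ?thesis by simp
    qed
    have C2: "best_response n m a i x = {xL n m a s, a}" if "s = J n m a"
      unfolding BR xLe using BR_case2[OF a cc(2) w0 cw_eq[OF that, unfolded ca_def] xo0[OF that]] .
    have C1: "best_response n m a i x = {a}" if "J n m a < s"
      unfolding BR using BR_case1[OF a cc(2) w0 cw_lt[OF that, unfolded ca_def]] .
    have C3: "best_response n m a i x = {xL n m a s}" if "K - a/(1-a) \<le> s" "s < J n m a"
    proof -
      have "0 \<le> 1 - (1-a)*w" using that(1) t_iff by simp
      then show ?thesis
        unfolding BR xLe using BR_case3[OF a cc(2) w0 cw_gt[OF that(2), unfolded ca_def]] by simp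
    qed
    have C4: "best_response n m a i x = {0}" if "s \<le> K - a/(1-a)"
      unfolding BR using BR_case4[OF a cc(1)] that t_iff2 by simp
    have E: "payoff n m a i (x(i := xL n m a s)) = payoff n m a i (x(i := a))
               \<and> xbar n (x(i := xL n m a s)) < m
               \<and> xbar n (x(i := a)) \<ge> m" if sJ: "s = J n m a"
    proof -
      have mem: "xL n m a s \<in> BRf a cc w" "a \<in> BRf a cc w" using C2[OF sJ] BR by auto
      have m1: "xL n m a s \<in> {0..1}" "\<forall>z\<in>{0..1}. Uf a cc w z \<le> Uf a cc w (xL n m a s)"
        using mem(1) unfolding BRf_def by auto
      have m2: "a \<in> {0..1}" "\<forall>z\<in>{0..1}. Uf a cc w z \<le> Uf a cc w a"
        using mem(2) unfolding BRf_def by auto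
      have "Uf a cc w (xL n m a s) = Uf a cc w a"
        using m1 m2 by (meson order_antisym)
      then have P: "payoff n m a i (x(i := xL n m a s)) = payoff n m a i (x(i := a))"
        unfolding PAY .
      have iv: "1/ca = 1 + K - s" using sJ Jv by simp
      have s_eq: "s = 1 + K - 1/ca" using iv by simp
      have NK: "(N-1)*K = N*m" unfolding K_def using N by simp
      have sN: "(N-1)*s = (N-1) + N*m - (N-1)/ca"
        unfolding s_eq using NK by (simp add: algebra_simps)
      have "xL n m a s + (N-1)*s = N + N*m - (N-a)/ca"
        unfolding xLe sN w_def iv[symmetric] using ca0 by (simp add: field_simps)
      moreover have "N < (N-a)/ca" using cb1 ca0 N by (simp add: field_simps)
      ultimately have "xL n m a s + (N-1)*s < N*m" by simp
      then have X1: "xbar n (x(i := xL n m a s)) < m" unfolding XB using N by (simp add: field_simps)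
      have "(N-1)/ca \<le> N - 1 + a" using cb2 ca0 N by (simp add: field_simps)
      then have "a + (N-1)*s \<ge> N*m" unfolding sN by simp
      then have X2: "xbar n (x(i := a)) \<ge> m" unfolding XB using N by (simp add: field_simps)
      show ?thesis using P X1 X2 by simp
    qed
    have tK: "real n * m / (real n - 1) - a / (1 - a) = K - a/(1-a)" unfolding K_def N_def ..
    show ?thesis unfolding Let_def s_def[symmetric] tK
      using E C1 C2 C3 C4 by auto
  qed
  show ?thesis
    using JP(1) JP(5) main unfolding a_def by blast
qed

end
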